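(* Let $F\in\mathbf F$ satisfy $\mathbf{H\mathcal A}$ and (I), and assume $\mathcal D(F)\neq\emptyset$. Then for every $g\in A_T(F)$ and every $Z\in\mathcal D(F)$ such that $\big(\mathbb E[Z\cdot g\mid\mathcal H_T]\big)^-\in L^1(\mathbb R;\mathcal F)$, one has $\mathbb E[Z\cdot g]\le0$.
   Context: Fix $T\in\mathbb N$, $\mathbb T=\{0,\dots,T\}$, $d\ge1$, a complete probability space $(\Omega,\mathcal F,\mathbb P)$ and a filtration $\mathbb H=(\mathcal H_t)_{t\in\mathbb T}$ with $\mathcal H_T\subset\mathcal F$ (no other relation between $\mathbb H$ and the other processes is assumed). Equalities and inequalities between random variables are understood $\mathbb P$-a.s. $\mathbb M^d$ denotes the real $d\times d$ matrices, $\mathbb M^d_+$ those with nonnegative entries, and $e_{ij}$ the matrix whose $(i,j)$ entry is $1$ and all other entries $0$. For $E\subset\mathbb M^d$ (or $E\subset\mathbb R^d$) and a $\sigma$-algebra $\mathcal G\subset\mathcal F$, $L^0(E;\mathcal G)$ is the set of $E$-valued $\mathcal G$-measurable random variables; $L^1(\mathbb R^d;\mathcal F)$ and $L^\infty(\mathbb R^d;\mathcal F)$ are the integrable, resp. bounded, elements of $L^0(\mathbb R^d;\mathcal F)$. A closed convex cone $\mathcal A\subset\mathbb M^d$ is fixed; $\mathbb L^0(\mathcal A;\mathbb H)$ denotes the set of $\mathcal A$-valued $\mathbb H$-adapted processes $(\eta_t)_{t\in\mathbb T}$. $\mathbb F$ is the set of continuous maps $f:\mathbb M^d\to\mathbb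 R^d$ such that (HF1) $f(\lambda a)=\lambda f(a)$ for all $\lambda\ge0$, $a\in\mathbb M^d$; (HF2) $f(\lambda a+\beta a')-(\lambda f(a)+\beta f(a'))\in\mathbb R^d_+$ for all $\lambda,\beta\ge0$, $a,a'\in\mathcal A$. $\mathbf F$ is the set of sequences $F=(F_t)_{t\in\mathbb T}$ of $\mathcal F$-measurable random maps $F_t:\Omega\times\mathbb M^d\to\mathbb R^d$ with $F_t(\omega,\cdot)\in\mathbb F$ for a.e. $\omega$ (no adaptedness to $\mathbb H$ is assumed); for a random matrix $\eta$, $F_t(\eta)(\omega)=F_t(\omega,\eta(\omega))$. $N_t(F)=\{F_t(\eta):\eta\in L^0(\mathcal A;\mathcal H_t)\}$, $N^0_t(F)=N_t(F)\cap(-N_t(F))$. For a process $\xi=(\xi_t)_{t\in\mathbb T}$, "$\xi\in N(F)$" means $\xi_t\in N_t(F)$ for all $t$. $V_t(\xi)=\sum_{s=0}^t\xi_s$ and $A_t(F)=\{V_t(\xi)-r:\ \xi\in N(F),\ r\in L^0(\mathbb R^d_+;\mathcal F)\}$. Condition $\mathbf{H\mathcal A}$: for every $t\in\mathbb T$: (1) $F_t(\delta e_{ij})=0$ whenever $\delta e_{ij}\notin\mathcal A$, $\delta\in\{-1,1\}$, $i,j\le d$; (2) for every $\eta\in L^0(\mathbb M^d;\mathcal F)$, $F_t(\eta)=\sum_{i,j\le d}(\eta^{ij})^+F_t(e_{ij})+(\eta^{ij})^-F_t(-e_{ij})$. Condition (I): $F_t(e_{ij}),F_t(-e_{ij})\in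 L^1(\mathbb R^d;\mathcal F)$ for all $i,j\le d$, $t\in\mathbb T$. For $Z\in L^\infty(\mathbb R^d;\mathcal F)$ and $\eta\in L^0(\mathcal A;\mathcal H_t)$, $\bar F_t(\eta;Z):=\mathbb E[Z\cdot F_t(\eta)\mid\mathcal H_t]$, which under $\mathbf{H\mathcal A}$ and (I) is understood as $\sum_{i,j}(\eta^{ij})^+\mathbb E[Z\cdot F_t(e_{ij})\mid\mathcal H_t]+(\eta^{ij})^-\mathbb E[Z\cdot F_t(-e_{ij})\mid\mathcal H_t]$ ($\cdot$ is the scalar product of $\mathbb R^d$). $\mathcal D(F)$ is the set of $Z\in L^\infty(\mathbb R^d;\mathcal F)$ with $Z^i>0$ a.s. for all $i\le d$ such that for all $\eta\in\mathbb L^0(\mathcal A;\mathbb H)$ and $t\in\mathbb T$: (D1) $\bar F_t(\eta_t;Z)\le0$; (D2) $F_t(\eta_t)\mathbf 1_{\{\bar F_t(\eta_t;Z)=0\}}\in N^0_t(F)$. *)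

theory Defs
  imports "HOL-Probability.Probability"
begin

type_synonym 'd mat = "real ^ 'd ^ 'd"

definition eij :: "'d::finite \<Rightarrow> 'd \<Rightarrow> 'd mat" where
  "eij i j = (\<chi> k l. if k = i \<and> l = j then 1 else 0)"

definition ppart :: "real \<Rightarrow> real" where "ppart x = max x 0"
definition npart :: "real \<Rightarrow> real" where "npart x = max (- x) 0"

definition Fclass :: "'d::finite mat set \<Rightarrow> ('d mat \<Rightarrow> real ^ 'd) set" where
  "Fclass A = {f. continuous_on UNIV f
      \<and> (\<forall>(l::real) a. l \<ge> 0 \<longrightarrow> f (l *\<^sub>R a) = l *\<^sub>R f a)
      \<and> (\<forall>(l::real) b a a'. l \<ge> 0 \<longrightarrow> b \<ge> 0 \<longrightarrow> a \<in> A \<longrightarrow> a' \<in> A \<longrightarrow>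
            (\<forall>k. (f (l *\<^sub>R a + b *\<^sub>R a') - (l *\<^sub>R f a + b *\<^sub>R f a')) $ k \<ge> 0))}"

definition in_bfF :: "'w measure \<Rightarrow> nat \<Rightarrow> 'd::finite mat set \<Rightarrow>
    (nat \<Rightarrow> 'w \<Rightarrow> 'd mat \<Rightarrow> real ^ 'd) \<Rightarrow> bool" where
  "in_bfF M T A F \<longleftrightarrow> (\<forall>t\<le>T.
      (\<lambda>(w, a). F t w a) \<in> borel_measurable (M \<Otimes>\<^sub>M borel)
      \<and> (AE w in M. F t w \<in> Fclass A))"

definition condHA :: "'w measure \<Rightarrow> nat \<Rightarrow> 'd::finite mat set \<Rightarrow>
    (nat \<Rightarrow> 'w \<Rightarrow> 'd mat \<Rightarrow> real ^ 'd) \<Rightarrow> bool" where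
  "condHA M T A F \<longleftrightarrow> (\<forall>t\<le>T.
      (\<forall>(\<delta>::real)\<in>{-1, 1}. \<forall>i j. \<delta> *\<^sub>R eij i j \<notin> A \<longrightarrow>
          (AE w in M. F t w (\<delta> *\<^sub>R eij i j) = 0))
      \<and> (\<forall>\<eta> \<in> borel_measurable M. AE w in M.
          F t w (\<eta> w) = (\<Sum>i\<in>UNIV. \<Sum>j\<in>UNIV.
              ppart (\<eta> w $ i $ j) *\<^sub>R F t w (eij i j)
            + npart (\<eta> w $ i $ j) *\<^sub>R F t w (- eij i j))))"

definition condI :: "'w measure \<Rightarrow> nat \<Rightarrow>
    (nat \<Rightarrow> 'w \<Rightarrow> 'd::finite mat \<Rightarrow> real ^ 'd) \<Rightarrow> bool" where
  "condI M T F \<longleftrightarrow> (\<forall>t\<le>T. \<forall>i j.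
      integrable M (\<lambda>w. F t w (eij i j)) \<and> integrable M (\<lambda>w. F t w (- eij i j)))"

definition L0A :: "'w measure \<Rightarrow> 'd::finite mat set \<Rightarrow> ('w \<Rightarrow> 'd mat) set" where
  "L0A N A = {\<eta>. \<eta> \<in> borel_measurable N \<and> (\<forall>w\<in>space N. \<eta> w \<in> A)}"

definition Nt :: "'w measure \<Rightarrow> (nat \<Rightarrow> 'w measure) \<Rightarrow> 'd::finite mat set \<Rightarrow>
    (nat \<Rightarrow> 'w \<Rightarrow> 'd mat \<Rightarrow> real ^ 'd) \<Rightarrow> nat \<Rightarrow> ('w \<Rightarrow> real ^ 'd) set" where
  "Nt M H A F t = {\<xi>. \<xi> \<in> borel_measurable M \<and>
      (\<exists>\<eta> \<in> L0A (H t) A. AE w in M. \<xi> w = F t w (\<eta> w))}"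

definition N0t :: "'w measure \<Rightarrow> (nat \<Rightarrow> 'w measure) \<Rightarrow> 'd::finite mat set \<Rightarrow>
    (nat \<Rightarrow> 'w \<Rightarrow> 'd mat \<Rightarrow> real ^ 'd) \<Rightarrow> nat \<Rightarrow> ('w \<Rightarrow> real ^ 'd) set" where
  "N0t M H A F t = {\<xi>. \<xi> \<in> Nt M H A F t \<and> (\<lambda>w. - \<xi> w) \<in> Nt M H A F t}"

definition At :: "'w measure \<Rightarrow> (nat \<Rightarrow> 'w measure) \<Rightarrow> 'd::finite mat set \<Rightarrow>
    (nat \<Rightarrow> 'w \<Rightarrow> 'd mat \<Rightarrow> real ^ 'd) \<Rightarrow> nat \<Rightarrow> nat \<Rightarrow> ('w \<Rightarrow> real ^ 'd) set" where
  "At M H A F T t = {g. g \<in> borel_measurable M \<and>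
      (\<exists>\<xi> r. (\<forall>s\<le>T. \<xi> s \<in> Nt M H A F s)
         \<and> r \<in> borel_measurable M \<and> (\<forall>w\<in>space M. \<forall>k. r w $ k \<ge> 0)
         \<and> (AE w in M. g w = (\<Sum>s\<le>t. \<xi> s w) - r w))}"

text \<open>\<open>\<bar>F\<close>_t(eta; Z), defined through the representation under H-A and (I).\<close>
definition Fbar :: "'w measure \<Rightarrow> (nat \<Rightarrow> 'w measure) \<Rightarrow>
    (nat \<Rightarrow> 'w \<Rightarrow> 'd::finite mat \<Rightarrow> real ^ 'd) \<Rightarrow> nat \<Rightarrow> ('w \<Rightarrow> 'd mat) \<Rightarrow>
    ('w \<Rightarrow> real ^ 'd) \<Rightarrow> 'w \<Rightarrow> real" where
  "Fbar M H F t \<eta> Z = (\<lambda>w. \<Sum>i\<in>UNIV. \<Sum>j\<in>UNIV.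
      ppart (\<eta> w $ i $ j) * real_cond_exp M (H t) (\<lambda>v. Z v \<bullet> F t v (eij i j)) w
    + npart (\<eta> w $ i $ j) * real_cond_exp M (H t) (\<lambda>v. Z v \<bullet> F t v (- eij i j)) w)"

definition DF :: "'w measure \<Rightarrow> (nat \<Rightarrow> 'w measure) \<Rightarrow> nat \<Rightarrow> 'd::finite mat set \<Rightarrow>
    (nat \<Rightarrow> 'w \<Rightarrow> 'd mat \<Rightarrow> real ^ 'd) \<Rightarrow> ('w \<Rightarrow> real ^ 'd) set" where
  "DF M H T A F = {Z. Z \<in> borel_measurable M \<and> (\<exists>C. AE w in M. norm (Z w) \<le> C)
      \<and> (AE w in M. \<forall>i. Z w $ i > 0)
      \<and> (\<forall>\<eta>. (\<forall>t\<le>T. \<eta> t \<in> L0A (H t) A) \<longrightarrow> (\<forall>t\<le>T.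
            (AE w in M. Fbar M H F t (\<eta> t) Z w \<le> 0)
          \<and> (\<lambda>w. if Fbar M H F t (\<eta> t) Z w = 0 then F t w (\<eta> t w) else 0)
                \<in> N0t M H A F t))}"

definition gcond_exp :: "'w measure \<Rightarrow> 'w measure \<Rightarrow> ('w \<Rightarrow> real) \<Rightarrow> 'w \<Rightarrow> ereal" where
  "gcond_exp M N X = (\<lambda>w. enn2ereal (nn_cond_exp M N (\<lambda>v. ennreal (X v)) w)
                          - enn2ereal (nn_cond_exp M N (\<lambda>v. ennreal (- X v)) w))"

end

theory Submission
  imports Defs
begin


lemma sub_meas:
  assumes "subalgebra M N" "sets N' \<subseteq> sets N" "subalgebra M N'" "f \<in> borel_measurable N'"
  shows "f \<in> borel_measurable N"
proof -
  have "space N = space N'" using assms unfolding subalgebra_def by auto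
  then show ?thesis using measurable_mono[of "borel" "borel" N' N] assms(2,4) by auto
qed

lemma nn_le_from_local:
  fixes h :: "'w \<Rightarrow> ennreal" and L :: "nat \<Rightarrow> 'w set"
  assumes [measurable]: "h \<in> borel_measurable M" "\<And>n. L n \<in> sets M"
    and mono: "\<And>n m. n \<le> m \<Longrightarrow> L n \<subseteq> L m"
    and cover: "\<And>w. w \<in> space M \<Longrightarrow> \<exists>n. w \<in> L n"
    and bnd: "\<And>n. (\<integral>\<^sup>+w. h w * indicator (L n) w \<partial>M) \<le> B"
  shows "(\<integral>\<^sup>+ w. h w \<partial>M) \<le> B"
proof -
  define f where "f n w = h w * indicator (L n) w" for n w
  have inc: "incseq f"
    unfolding incseq_def f_def le_fun_def
    by (auto intro!: mult_left_mono simp: indicator_def dest: mono split: if_splits)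
  have sup: "(SUP n. f n w) = h w" if ww: "w \<in> space M" for w
  proof (rule antisym)
    show "(SUP n. f n w) \<le> h w" by (auto intro!: SUP_least simp: f_def indicator_def)
    obtain n where "w \<in> L n" using cover[OF ww] by blast
    then have "f n w = h w" by (simp add: f_def)
    then show "h w \<le> (SUP n. f n w)" by (metis SUP_upper UNIV_I)
  qed
  have "(\<integral>\<^sup>+ w. h w \<partial>M) = (\<integral>\<^sup>+ w. (SUP n. f n w) \<partial>M)"
    by (rule nn_integral_cong) (simp add: sup)
  also have "\<dots> = (SUP n. integral\<^sup>N M (f n))"
    by (rule nn_integral_monotone_convergence_SUP[OF inc]) (unfold f_def, measurable)
  also have "\<dots> \<le> B" by (rule SUP_least, unfold f_def, rule bnd)
  finally show ?thesis .
qed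

locale core_setting =
  fixes M :: "'w measure" and G :: "nat \<Rightarrow> 'w measure" and T :: nat
    and a :: "nat \<Rightarrow> 'k::finite \<Rightarrow> 'w \<Rightarrow> real" and U :: "nat \<Rightarrow> 'k \<Rightarrow> 'w \<Rightarrow> real"
  assumes prob: "prob_space M"
   and subalg: "\<And>t. t \<le> T \<Longrightarrow> subalgebra M (G t)"
   and filt: "\<And>s t. s \<le> t \<Longrightarrow> t \<le> T \<Longrightarrow> sets (G s) \<subseteq> sets (G t)"
   and a_meas: "\<And>s k. s \<le> T \<Longrightarrow> a s k \<in> borel_measurable (G s)"
   and a_nn: "\<And>s k w. 0 \<le> a s k w"
   and U_int: "\<And>s k. s \<le> T \<Longrightarrow> integrable M (U s k)"
   and hyp: "\<And>s. s \<le> T \<Longrightarrow> AE w in M. (\<Sum>k\<in>UNIV. a s k w * real_cond_exp M (G s) (U s k) w) \<le> 0"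
begin

lemma sfs: "t \<le> T \<Longrightarrow> sigma_finite_subalgebra M (G t)"
  apply (rule finite_measure_subalgebra_is_sigma_finite)
  apply (rule finite_measure_subalgebra.intro)
  using prob apply (simp add: prob_space_def)
  apply (rule finite_measure_subalgebra_axioms.intro)
  by (rule subalg)

lemma a_meas': "s \<le> t \<Longrightarrow> t \<le> T \<Longrightarrow> a s k \<in> borel_measurable (G t)"
proof -
  assume st: "s \<le> t" "t \<le> T"
  show ?thesis by (rule sub_meas[OF subalg[OF st(2)] filt[OF st] subalg a_meas]) (use st in auto)
qed

lemma a_measM: "s \<le> T \<Longrightarrow> a s k \<in> borel_measurable M"
  using measurable_from_subalg[OF subalg a_meas] by blast

lemma U_meas [measurable]: "s \<le> T \<Longrightarrow> U s k \<in> borel_measurable M"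
  using U_int by auto

lemma sets_G: "t \<le> T \<Longrightarrow> A \<in> sets (G t) \<Longrightarrow> A \<in> sets M"
  using subalg unfolding subalgebra_def by auto

lemma space_G: "t \<le> T \<Longrightarrow> space (G t) = space M"
  using subalg unfolding subalgebra_def by auto

lemma term_bound:
  assumes "s \<le> t" "\<And>w. w \<in> A \<Longrightarrow> (\<Sum>s\<le>t. \<Sum>k\<in>UNIV. a s k w) \<le> n"
  shows "\<bar>indicator A w * a s k w\<bar> \<le> \<bar>n\<bar>"
proof (cases "w \<in> A")
  case True
  have "a s k w \<le> (\<Sum>k\<in>UNIV. a s k w)"
    by (rule member_le_sum) (auto simp: a_nn)
  also have "\<dots> \<le> (\<Sum>s\<le>t. \<Sum>k\<in>UNIV. a s k w)"
    by (rule member_le_sum[where f="\<lambda>s. \<Sum>k\<in>UNIV. a s k w"]) (use assms(1) in \<open>auto intro: sum_nonneg a_nn\<close>)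
  also have "\<dots> \<le> n" using assms(2) True by blast
  finally show ?thesis using True a_nn[of s k w] by auto
qed simp

lemma term_int:
  assumes "s \<le> t" "t \<le> t'" "t' \<le> T" "A \<in> sets (G t')"
    "\<And>w. w \<in> A \<Longrightarrow> (\<Sum>s\<le>t. \<Sum>k\<in>UNIV. a s k w) \<le> n"
  shows "integrable M (\<lambda>w. (indicator A w * a s k w) * U s k w)"
    "integrable M (\<lambda>w. (indicator A w * a s k w) * real_cond_exp M (G t') (U s k) w)"
    "(\<integral>w. (indicator A w * a s k w) * real_cond_exp M (G t') (U s k) w \<partial>M)
      = (\<integral>w. (indicator A w * a s k w) * U s k w \<partial>M)"
proof -
  have sT: "s \<le> T" using assms by auto
  have fm: "(\<lambda>w. indicator A w * a s k w) \<in> borel_measurable (G t')"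
    using a_meas'[of s t'] assms by (intro borel_measurable_times borel_measurable_indicator) auto
  have fmM: "(\<lambda>w. indicator A w * a s k w) \<in> borel_measurable M"
    using measurable_from_subalg[OF subalg[OF assms(3)] fm] .
  show i1: "integrable M (\<lambda>w. (indicator A w * a s k w) * U s k w)"
  proof (rule Bochner_Integration.integrable_bound[where f="\<lambda>w. n * U s k w"])
    show "integrable M (\<lambda>w. n * U s k w)" using U_int[OF sT] by simp
    show "(\<lambda>w. (indicator A w * a s k w) * U s k w) \<in> borel_measurable M"
      using fmM U_meas[OF sT] by measurable
    show "AE w in M. norm (indicator A w * a s k w * U s k w) \<le> norm (n * U s k w)"
      using term_bound[OF assms(1,5)] by (auto simp: abs_mult intro!: mult_right_mono)
  qed
  interpret S: sigma_finite_subalgebra M "G t'" using sfs[OF assms(3)] .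
  show "integrable M (\<lambda>w. (indicator A w * a s k w) * real_cond_exp M (G t') (U s k) w)"
    "(\<integral>w. (indicator A w * a s k w) * real_cond_exp M (G t') (U s k) w \<partial>M)
      = (\<integral>w. (indicator A w * a s k w) * U s k w \<partial>M)"
    using S.real_cond_exp_intg[OF i1 fm U_meas[OF sT]] by auto
qed

lemma loc_int:
  assumes "t \<le> t'" "t' \<le> T" "A \<in> sets (G t')"
    "\<And>w. w \<in> A \<Longrightarrow> (\<Sum>s\<le>t. \<Sum>k\<in>UNIV. a s k w) \<le> n"
  shows "integrable M (\<lambda>w. indicator A w * (\<Sum>s\<le>t. \<Sum>k\<in>UNIV. a s k w * real_cond_exp M (G t') (U s k) w))"
    "integrable M (\<lambda>w. indicator A w * (\<Sum>s\<le>t. \<Sum>k\<in>UNIV. a s k w * U s k w))"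
    "(\<integral>w. indicator A w * (\<Sum>s\<le>t. \<Sum>k\<in>UNIV. a s k w * real_cond_exp M (G t') (U s k) w) \<partial>M)
     = (\<integral>w. indicator A w * (\<Sum>s\<le>t. \<Sum>k\<in>UNIV. a s k w * U s k w) \<partial>M)"
proof -
  have e1: "(\<lambda>w. indicator A w * (\<Sum>s\<le>t. \<Sum>k\<in>UNIV. a s k w * real_cond_exp M (G t') (U s k) w))
     = (\<lambda>w. \<Sum>s\<le>t. \<Sum>k\<in>UNIV. (indicator A w * a s k w) * real_cond_exp M (G t') (U s k) w)"
    by (simp add: sum_distrib_left mult.assoc)
  have e2: "(\<lambda>w. indicator A w * (\<Sum>s\<le>t. \<Sum>k\<in>UNIV. a s k w * U s k w))
     = (\<lambda>w. \<Sum>s\<le>t. \<Sum>k\<in>UNIV. (indicator A w * a s k w) * U s k w)"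
    by (simp add: sum_distrib_left mult.assoc)
  have ti1: "\<And>s k. s \<le> t \<Longrightarrow> integrable M (\<lambda>w. (indicator A w * a s k w) * U s k w)"
    using term_int(1)[OF _ assms(1,2,3)] assms(4) by blast
  have ti2: "\<And>s k. s \<le> t \<Longrightarrow> integrable M (\<lambda>w. (indicator A w * a s k w) * real_cond_exp M (G t') (U s k) w)"
    using term_int(2)[OF _ assms(1,2,3)] assms(4) by blast
  have ti3: "\<And>s k. s \<le> t \<Longrightarrow> (\<integral>w. (indicator A w * a s k w) * real_cond_exp M (G t') (U s k) w \<partial>M)
      = (\<integral>w. (indicator A w * a s k w) * U s k w \<partial>M)"
    using term_int(3)[OF _ assms(1,2,3)] assms(4) by blast
  note ti = ti1 ti2 ti3
  show "integrable M (\<lambda>w. indicator A w * (\<Sum>s\<le>t. \<Sum>k\<in>UNIV. a s k w * real_cond_exp M (G t') (U s k) w))"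
    unfolding e1 using ti by (intro Bochner_Integration.integrable_sum) auto
  show "integrable M (\<lambda>w. indicator A w * (\<Sum>s\<le>t. \<Sum>k\<in>UNIV. a s k w * U s k w))"
    unfolding e2 using ti by (intro Bochner_Integration.integrable_sum) auto
  show "(\<integral>w. indicator A w * (\<Sum>s\<le>t. \<Sum>k\<in>UNIV. a s k w * real_cond_exp M (G t') (U s k) w) \<partial>M)
     = (\<integral>w. indicator A w * (\<Sum>s\<le>t. \<Sum>k\<in>UNIV. a s k w * U s k w) \<partial>M)"
  proof -
    have l: "(\<integral>w. (\<Sum>s\<le>t. \<Sum>k\<in>UNIV. (indicator A w * a s k w) * real_cond_exp M (G t') (U s k) w) \<partial>M)
      = (\<Sum>s\<le>t. \<Sum>k\<in>UNIV. (\<integral>w. (indicator A w * a s k w) * real_cond_exp M (G t') (U s k) w \<partial>M))"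
      using ti by (subst Bochner_Integration.integral_sum, force intro: Bochner_Integration.integrable_sum)
        (auto intro!: sum.cong Bochner_Integration.integral_sum)
    have r: "(\<integral>w. (\<Sum>s\<le>t. \<Sum>k\<in>UNIV. (indicator A w * a s k w) * U s k w) \<partial>M)
      = (\<Sum>s\<le>t. \<Sum>k\<in>UNIV. (\<integral>w. (indicator A w * a s k w) * U s k w \<partial>M))"
      using ti by (subst Bochner_Integration.integral_sum, force intro: Bochner_Integration.integrable_sum)
        (auto intro!: sum.cong Bochner_Integration.integral_sum)
    show ?thesis unfolding e1 e2 l r using ti3 by (auto intro!: sum.cong)
  qed
qed

definition C where "C t w = (\<Sum>s\<le>t. \<Sum>k\<in>UNIV. a s k w * real_cond_exp M (G t) (U s k) w)"
definition Lset where "Lset t n = {w \<in> space M. (\<Sum>s\<le>t. \<Sum>k\<in>UNIV. a s k w) \<le> real n}"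

lemma sum_a_meas: "t \<le> T \<Longrightarrow> (\<lambda>w. \<Sum>s\<le>t. \<Sum>k\<in>UNIV. a s k w) \<in> borel_measurable (G t)"
  using a_meas' by (intro borel_measurable_sum) auto

lemma Lset_sets: "t \<le> T \<Longrightarrow> Lset t n \<in> sets (G t)"
proof -
  assume tT: "t \<le> T"
  have "Lset t n = {w \<in> space (G t). (\<Sum>s\<le>t. \<Sum>k\<in>UNIV. a s k w) \<le> real n}"
    unfolding Lset_def using space_G[OF tT] by simp
  also have "\<dots> = (\<lambda>w. \<Sum>s\<le>t. \<Sum>k\<in>UNIV. a s k w) -` {..real n} \<inter> space (G t)" by auto
  also have "\<dots> \<in> sets (G t)" by (rule measurable_sets[OF sum_a_meas[OF tT]]) simp
  finally show ?thesis .
qed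

lemma Lset_setsM: "t \<le> T \<Longrightarrow> Lset t n \<in> sets M"
  using Lset_sets sets_G by blast

lemma Lset_mono: "n \<le> m \<Longrightarrow> Lset t n \<subseteq> Lset t m"
proof
  fix w assume "n \<le> m" "w \<in> Lset t n"
  moreover have "real n \<le> real m" using \<open>n \<le> m\<close> by simp
  ultimately show "w \<in> Lset t m" unfolding Lset_def by auto
qed

lemma Lset_cover: "w \<in> space M \<Longrightarrow> \<exists>n. w \<in> Lset t n"
proof -
  assume w: "w \<in> space M"
  obtain n where "(\<Sum>s\<le>t. \<Sum>k\<in>UNIV. a s k w) \<le> real n" using real_arch_simple by blast
  then show ?thesis unfolding Lset_def using w by blast
qed

lemma Lset_bound: "w \<in> Lset t n \<Longrightarrow> (\<Sum>s\<le>t. \<Sum>k\<in>UNIV. a s k w) \<le> real n"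
  unfolding Lset_def by auto

lemma C_meas: "t \<le> T \<Longrightarrow> C t \<in> borel_measurable (G t)"
proof -
  assume tT: "t \<le> T"
  have "(\<lambda>w. a s k w * real_cond_exp M (G t) (U s k) w) \<in> borel_measurable (G t)" if "s \<le> t" for s k
    using a_meas'[OF that tT] by (rule borel_measurable_times) simp
  then have "(\<lambda>w. \<Sum>s\<le>t. \<Sum>k\<in>UNIV. a s k w * real_cond_exp M (G t) (U s k) w) \<in> borel_measurable (G t)"
    by (intro borel_measurable_sum) auto
  then show ?thesis unfolding C_def[abs_def] .
qed

lemma C_measM: "t \<le> T \<Longrightarrow> C t \<in> borel_measurable M"
  using measurable_from_subalg[OF subalg C_meas] by blast

lemma ennreal_integral_le:
  assumes "integrable M f"
  shows "ennreal (integral\<^sup>L M f) \<le> (\<integral>\<^sup>+ w. ennreal (f w) \<partial>M)"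
proof -
  have fin: "(\<integral>\<^sup>+ w. ennreal (f w) \<partial>M) \<noteq> \<infinity>" using assms real_integrable_def by blast
  have "integral\<^sup>L M f \<le> enn2real (\<integral>\<^sup>+ w. ennreal (f w) \<partial>M)"
    using real_lebesgue_integral_def[OF assms] enn2real_nonneg[of "\<integral>\<^sup>+ w. ennreal (- f w) \<partial>M"] by linarith
  then have "ennreal (integral\<^sup>L M f) \<le> ennreal (enn2real (\<integral>\<^sup>+ w. ennreal (f w) \<partial>M))"
    by (rule ennreal_leI)
  also have "\<dots> = (\<integral>\<^sup>+ w. ennreal (f w) \<partial>M)" using fin by (simp add: ennreal_enn2real_if)
  finally show ?thesis .
qed

lemma ennreal_le_of_enn2real:
  fixes P N :: ennreal
  assumes "P \<noteq> \<infinity>" "N \<noteq> \<infinity>" "enn2real P \<le> enn2real N"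
  shows "P \<le> N"
proof -
  have "ennreal (enn2real P) \<le> ennreal (enn2real N)" by (rule ennreal_leI[OF assms(3)])
  moreover have "P < top" "N < top" using assms by (simp_all add: less_top)
  ultimately show ?thesis by (simp add: ennreal_enn2real)
qed

lemma base: "0 \<le> T \<Longrightarrow> (\<integral>\<^sup>+ w. ennreal (C 0 w) \<partial>M) \<le> (\<integral>\<^sup>+ w. ennreal (- C 0 w) \<partial>M)"
proof -
  have "AE w in M. ennreal (C 0 w) = 0"
    using hyp[OF zero_le] proof eventually_elim
    case (elim w)
    then have "C 0 w \<le> 0" unfolding C_def by simp
    then show ?case by (rule ennreal_eq_0_iff[THEN iffD2])
  qed
  then have "(\<integral>\<^sup>+ w. ennreal (C 0 w) \<partial>M) = 0" by (simp add: nn_integral_cong_AE)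
  then show ?thesis by simp
qed

lemma ind_abs: "\<bar>indicator A x * (y::real)\<bar> \<le> \<bar>y\<bar>"
  by (simp add: indicator_def)

lemma ind_conv: "w \<in> space M \<Longrightarrow> (\<lambda>n. indicator (Lset t n) w * f w) \<longlonglongrightarrow> (f w :: real)"
proof -
  assume w: "w \<in> space M"
  obtain n0 where n0: "w \<in> Lset t n0" using Lset_cover[OF w] by blast
  have "eventually (\<lambda>n. indicator (Lset t n) w * f w = f w) sequentially"
    unfolding eventually_sequentially
    using n0 Lset_mono by (intro exI[of _ n0]) (auto simp: indicator_def)
  then show ?thesis by (rule tendsto_eventually)
qed

lemma step:
  assumes tT: "Suc t \<le> T"
    and IH: "(\<integral>\<^sup>+w. ennreal (C t w) \<partial>M) \<le> (\<integral>\<^sup>+w. ennreal (- C t w) \<partial>M)"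
  shows "(\<integral>\<^sup>+w. ennreal (C (Suc t) w) \<partial>M) \<le> (\<integral>\<^sup>+w. ennreal (- C (Suc t) w) \<partial>M)"
proof -
  have tT': "t \<le> T" using tT by simp
  define D where "D w = (\<Sum>s\<le>t. \<Sum>k\<in>UNIV. a s k w * real_cond_exp M (G (Suc t)) (U s k) w)" for w
  have D_meas[measurable]: "D \<in> borel_measurable M"
  proof -
    have "(\<lambda>w. a s k w * real_cond_exp M (G (Suc t)) (U s k) w) \<in> borel_measurable M" if "s \<le> t" for s k
      using a_measM[of s k] that tT by (intro borel_measurable_times) auto
    then show ?thesis unfolding D_def[abs_def] by (intro borel_measurable_sum) auto
  qed
  have Cm[measurable]: "C t \<in> borel_measurable M" "C (Suc t) \<in> borel_measurable M"
    using C_measM tT by auto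
  have CleD: "AE w in M. C (Suc t) w \<le> D w"
    using hyp[OF tT] proof eventually_elim
    case (elim w)
    have "C (Suc t) w = D w + (\<Sum>k\<in>UNIV. a (Suc t) k w * real_cond_exp M (G (Suc t)) (U (Suc t) k) w)"
      unfolding C_def D_def by (simp add: sum.atMost_Suc)
    then show ?case using elim by simp
  qed
  have KF: "integrable M (\<lambda>w. indicator A w * D w)" "integrable M (\<lambda>w. indicator A w * C t w)"
    "(\<integral>w. indicator A w * D w \<partial>M) = (\<integral>w. indicator A w * C t w \<partial>M)"
    if A: "A \<in> sets (G t)" "A \<subseteq> Lset t n" for A n
  proof -
    have bd: "\<And>w. w \<in> A \<Longrightarrow> (\<Sum>s\<le>t. \<Sum>k\<in>UNIV. a s k w) \<le> real n"
      using A(2) Lset_bound by blast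
    have A': "A \<in> sets (G (Suc t))" using filt[of t "Suc t"] tT A(1) by auto
    note l1 = loc_int[of t "Suc t" A "real n", OF _ tT A' bd]
    note l2 = loc_int[of t t A "real n", OF _ tT' A(1) bd]
    show "integrable M (\<lambda>w. indicator A w * D w)" using l1 unfolding D_def by simp
    show "integrable M (\<lambda>w. indicator A w * C t w)" using l2 unfolding C_def by simp
    show "(\<integral>w. indicator A w * D w \<partial>M) = (\<integral>w. indicator A w * C t w \<partial>M)"
      using l1 l2 unfolding D_def C_def by simp
  qed
  show ?thesis
  proof (cases "(\<integral>\<^sup>+w. ennreal (- D w) \<partial>M) = \<infinity>")
    case True
    have "(\<integral>\<^sup>+w. ennreal (- D w) \<partial>M) \<le> (\<integral>\<^sup>+w. ennreal (- C (Suc t) w) \<partial>M)"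
      using CleD by (intro nn_integral_mono_AE) (auto elim!: eventually_mono intro: ennreal_leI)
    then show ?thesis using True by (simp add: top_unique)
  next
    case False
    define ND where "ND = (\<integral>\<^sup>+w. ennreal (- D w) \<partial>M)"
    have NDfin: "ND \<noteq> \<infinity>" "ND < top" using False unfolding ND_def by (auto simp: less_top)
    have negC: "(\<integral>\<^sup>+w. ennreal (- C t w) \<partial>M) \<le> ND"
    proof (rule nn_le_from_local[where L="Lset t"])
      show "(\<lambda>w. ennreal (- C t w)) \<in> borel_measurable M" by measurable
      show "\<And>n. Lset t n \<in> sets M" using Lset_setsM tT' by blast
      show "\<And>n m. n \<le> m \<Longrightarrow> Lset t n \<subseteq> Lset t m" by (rule Lset_mono)
      show "\<And>w. w \<in> space M \<Longrightarrow> \<exists>n. w \<in> Lset t n" by (rule Lset_cover)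
      fix n
      define A where "A = {w \<in> space M. C t w < 0} \<inter> Lset t n"
      have "{w \<in> space M. C t w < 0} = C t -` {..<0} \<inter> space (G t)" using space_G[OF tT'] by auto
      also have "\<dots> \<in> sets (G t)" by (rule measurable_sets[OF C_meas[OF tT']]) simp
      finally have A_sets: "A \<in> sets (G t)" unfolding A_def using Lset_sets[OF tT'] by auto
      have AL: "A \<subseteq> Lset t n" unfolding A_def by auto
      have "(\<integral>\<^sup>+w. ennreal (- C t w) * indicator (Lset t n) w \<partial>M) = (\<integral>\<^sup>+w. ennreal (- (indicator A w * C t w)) \<partial>M)"
        by (rule nn_integral_cong) (auto simp: A_def indicator_def ennreal_neg)
      also have "\<dots> = ennreal (\<integral>w. - (indicator A w * C t w) \<partial>M)"
        using KF(2)[OF A_sets AL] by (intro nn_integral_eq_integral) (auto simp: A_def indicator_def)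
      also have "\<dots> = ennreal (\<integral>w. - (indicator A w * D w) \<partial>M)"
        using KF(3)[OF A_sets AL] by simp
      also have "\<dots> \<le> (\<integral>\<^sup>+w. ennreal (- (indicator A w * D w)) \<partial>M)"
        using KF(1)[OF A_sets AL] by (intro ennreal_integral_le) auto
      also have "\<dots> \<le> ND" unfolding ND_def by (intro nn_integral_mono) (auto simp: indicator_def)
      finally show "(\<integral>\<^sup>+w. ennreal (- C t w) * indicator (Lset t n) w \<partial>M) \<le> ND" .
    qed
    have finC: "(\<integral>\<^sup>+w. ennreal (- C t w) \<partial>M) \<noteq> \<infinity>" "(\<integral>\<^sup>+w. ennreal (C t w) \<partial>M) \<noteq> \<infinity>"
      using negC IH NDfin by (auto simp: top_unique)
    have Cint: "integrable M (C t)" using finC real_integrable_def Cm by blast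
    have "enn2real (\<integral>\<^sup>+w. ennreal (C t w) \<partial>M) \<le> enn2real (\<integral>\<^sup>+w. ennreal (- C t w) \<partial>M)"
      using IH finC by (intro enn2real_mono) (auto simp: less_top)
    then have Cle0: "integral\<^sup>L M (C t) \<le> 0" using real_lebesgue_integral_def[OF Cint] by simp
    define B where "B = ennreal ((\<integral>w. \<bar>C t w\<bar> \<partial>M) + enn2real ND)"
    have posD: "(\<integral>\<^sup>+w. ennreal (D w) \<partial>M) \<le> B"
    proof (rule nn_le_from_local[where L="Lset t"])
      show "(\<lambda>w. ennreal (D w)) \<in> borel_measurable M" by measurable
      show "\<And>n. Lset t n \<in> sets M" using Lset_setsM tT' by blast
      show "\<And>n m. n \<le> m \<Longrightarrow> Lset t n \<subseteq> Lset t m" by (rule Lset_mono)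
      show "\<And>w. w \<in> space M \<Longrightarrow> \<exists>n. w \<in> Lset t n" by (rule Lset_cover)
      fix n
      define f where "f w = indicator (Lset t n) w * D w" for w
      have LS: "Lset t n \<in> sets (G t)" using Lset_sets[OF tT'] .
      have fint: "integrable M f" unfolding f_def using KF(1)[OF LS order_refl] by simp
      have e: "(\<integral>\<^sup>+w. ennreal (D w) * indicator (Lset t n) w \<partial>M) = (\<integral>\<^sup>+w. ennreal (f w) \<partial>M)"
        by (intro nn_integral_cong) (simp add: f_def indicator_def)
      have fneg: "(\<integral>\<^sup>+w. ennreal (- f w) \<partial>M) \<le> ND"
        unfolding ND_def f_def by (intro nn_integral_mono) (auto simp: indicator_def)
      have finf: "(\<integral>\<^sup>+w. ennreal (f w) \<partial>M) \<noteq> \<infinity>" "(\<integral>\<^sup>+w. ennreal (- f w) \<partial>M) \<noteq> \<infinity>"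
        using fint real_integrable_def by blast+
      have "integral\<^sup>L M f = (\<integral>w. indicator (Lset t n) w * C t w \<partial>M)"
        unfolding f_def using KF(3)[OF LS order_refl] by simp
      also have "\<dots> \<le> (\<integral>w. \<bar>C t w\<bar> \<partial>M)"
        using KF(2)[OF LS order_refl] Cint by (intro integral_mono) (auto simp: indicator_def)
      finally have i1: "integral\<^sup>L M f \<le> (\<integral>w. \<bar>C t w\<bar> \<partial>M)" .
      have i2: "enn2real (\<integral>\<^sup>+w. ennreal (- f w) \<partial>M) \<le> enn2real ND"
        using fneg NDfin by (intro enn2real_mono) auto
      have "enn2real (\<integral>\<^sup>+w. ennreal (f w) \<partial>M) \<le> (\<integral>w. \<bar>C t w\<bar> \<partial>M) + enn2real ND"
        using real_lebesgue_integral_def[OF fint] i1 i2 by linarith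
      then have "ennreal (enn2real (\<integral>\<^sup>+w. ennreal (f w) \<partial>M)) \<le> B" unfolding B_def by (rule ennreal_leI)
      then show "(\<integral>\<^sup>+w. ennreal (D w) * indicator (Lset t n) w \<partial>M) \<le> B"
        unfolding e using finf by (simp add: ennreal_enn2real less_top)
    qed
    have Dint: "integrable M D"
    proof -
      have "B < top" unfolding B_def by simp
      then have "(\<integral>\<^sup>+w. ennreal (D w) \<partial>M) < top" using posD by (rule le_less_trans[rotated])
      then show ?thesis unfolding real_integrable_def using False by auto
    qed
    have lim1: "(\<lambda>n. \<integral>w. indicator (Lset t n) w * D w \<partial>M) \<longlonglongrightarrow> integral\<^sup>L M D"
    proof (rule integral_dominated_convergence[where w="\<lambda>w. \<bar>D w\<bar>"])
      show "integrable M (\<lambda>w. \<bar>D w\<bar>)" using Dint by simp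
      show "AE x in M. (\<lambda>n. indicator (Lset t n) x * D x) \<longlonglongrightarrow> D x" by (rule AE_I2) (rule ind_conv)
      show "\<And>n. AE x in M. norm (indicator (Lset t n) x * D x) \<le> \<bar>D x\<bar>"
        using ind_abs by (intro AE_I2) simp
      show "\<And>n. (\<lambda>w. indicator (Lset t n) w * D w) \<in> borel_measurable M"
        using Lset_setsM[OF tT'] by measurable
    qed simp
    have lim2: "(\<lambda>n. \<integral>w. indicator (Lset t n) w * C t w \<partial>M) \<longlonglongrightarrow> integral\<^sup>L M (C t)"
    proof (rule integral_dominated_convergence[where w="\<lambda>w. \<bar>C t w\<bar>"])
      show "integrable M (\<lambda>w. \<bar>C t w\<bar>)" using Cint by simp
      show "AE x in M. (\<lambda>n. indicator (Lset t n) x * C t x) \<longlonglongrightarrow> C t x" by (rule AE_I2) (rule ind_conv)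
      show "\<And>n. AE x in M. norm (indicator (Lset t n) x * C t x) \<le> \<bar>C t x\<bar>"
        using ind_abs by (intro AE_I2) simp
      show "\<And>n. (\<lambda>w. indicator (Lset t n) w * C t w) \<in> borel_measurable M"
        using Lset_setsM[OF tT'] by measurable
    qed simp
    have "integral\<^sup>L M D = integral\<^sup>L M (C t)"
    proof -
      have eqseq: "(\<lambda>n. \<integral>w. indicator (Lset t n) w * D w \<partial>M) = (\<lambda>n. \<integral>w. indicator (Lset t n) w * C t w \<partial>M)"
        using KF(3)[OF Lset_sets[OF tT'] order_refl] by simp
      show ?thesis using lim1 lim2 unfolding eqseq by (rule LIMSEQ_unique)
    qed
    then have Dle0: "integral\<^sup>L M D \<le> 0" using Cle0 by simp
    have finD: "(\<integral>\<^sup>+w. ennreal (D w) \<partial>M) \<noteq> \<infinity>" "(\<integral>\<^sup>+w. ennreal (- D w) \<partial>M) \<noteq> \<infinity>"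
      using Dint real_integrable_def by blast+
    have DD: "(\<integral>\<^sup>+w. ennreal (D w) \<partial>M) \<le> ND"
      unfolding ND_def using finD real_lebesgue_integral_def[OF Dint] Dle0
      by (intro ennreal_le_of_enn2real) auto
    have "(\<integral>\<^sup>+w. ennreal (C (Suc t) w) \<partial>M) \<le> (\<integral>\<^sup>+w. ennreal (D w) \<partial>M)"
      using CleD by (intro nn_integral_mono_AE) (auto elim!: eventually_mono intro: ennreal_leI)
    also have "\<dots> \<le> ND" by (rule DD)
    also have "\<dots> \<le> (\<integral>\<^sup>+w. ennreal (- C (Suc t) w) \<partial>M)"
      unfolding ND_def using CleD by (intro nn_integral_mono_AE) (auto elim!: eventually_mono intro: ennreal_leI)
    finally show ?thesis .
  qed
qed

lemma induct_all: "t \<le> T \<Longrightarrow> (\<integral>\<^sup>+w. ennreal (C t w) \<partial>M) \<le> (\<integral>\<^sup>+w. ennreal (- C t w) \<partial>M)"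
proof (induction t)
  case 0
  then show ?case by (rule base)
next
  case (Suc t)
  then show ?case using step by simp
qed

lemma enn_fin_eq: "(x::ennreal) \<noteq> \<infinity> \<Longrightarrow> enn2ereal x = ereal (enn2real x)"
  by (cases x rule: ennreal_cases) auto

lemma S_local:
  fixes n :: nat
  defines "B \<equiv> Lset T n"
  defines "S \<equiv> (\<lambda>w. \<Sum>s\<le>T. \<Sum>k\<in>UNIV. a s k w * U s k w)"
  shows "AE w in M. w \<in> B \<longrightarrow>
    enn2ereal (nn_cond_exp M (G T) (\<lambda>w. ennreal (S w)) w) - enn2ereal (nn_cond_exp M (G T) (\<lambda>w. ennreal (- S w)) w)
     = ereal (C T w)"
proof -
  interpret GT: sigma_finite_subalgebra M "G T" using sfs[of T] by simp
  have B_sets: "B \<in> sets (G T)" unfolding B_def by (rule Lset_sets) simp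
  have B_setsM: "B \<in> sets M" using B_sets sets_G by blast
  have bd: "\<And>w. w \<in> B \<Longrightarrow> (\<Sum>s\<le>T. \<Sum>k\<in>UNIV. a s k w) \<le> real n" unfolding B_def by (rule Lset_bound)
  have S_meas[measurable]: "S \<in> borel_measurable M"
  proof -
    have "(\<lambda>w. a s k w * U s k w) \<in> borel_measurable M" if "s \<le> T" for s k
      using a_measM[OF that] U_meas[OF that] by (intro borel_measurable_times)
    then show ?thesis unfolding S_def by (intro borel_measurable_sum) auto
  qed
  define Sn where "Sn w = indicator B w * S w" for w
  have Sn_int: "integrable M Sn"
    unfolding Sn_def S_def using loc_int(2)[of T T B "real n", OF _ _ B_sets bd] by simp
  have CT_meas: "C T \<in> borel_measurable (G T)" by (rule C_meas) simp
  have ICT_int: "integrable M (\<lambda>w. indicator B w * C T w)"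
    unfolding C_def using loc_int(1)[of T T B "real n", OF _ _ B_sets bd] by simp
  have rce: "AE w in M. real_cond_exp M (G T) Sn w = indicator B w * C T w"
  proof (rule GT.real_cond_exp_charact)
    fix A assume A: "A \<in> sets (G T)"
    have AB: "A \<inter> B \<in> sets (G T)" using A B_sets by auto
    have bd': "\<And>w. w \<in> A \<inter> B \<Longrightarrow> (\<Sum>s\<le>T. \<Sum>k\<in>UNIV. a s k w) \<le> real n" using bd by blast
    have e1: "(\<integral>w\<in>A. Sn w \<partial>M) = (\<integral>w. indicator (A \<inter> B) w * (\<Sum>s\<le>T. \<Sum>k\<in>UNIV. a s k w * U s k w) \<partial>M)"
      unfolding set_lebesgue_integral_def Sn_def S_def
      by (intro Bochner_Integration.integral_cong) (auto simp: indicator_def)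
    have e2: "(\<integral>w\<in>A. indicator B w * C T w \<partial>M) = (\<integral>w. indicator (A \<inter> B) w * (\<Sum>s\<le>T. \<Sum>k\<in>UNIV. a s k w * real_cond_exp M (G T) (U s k) w) \<partial>M)"
      unfolding set_lebesgue_integral_def C_def
      by (intro Bochner_Integration.integral_cong) (auto simp: indicator_def)
    show "(\<integral>w\<in>A. Sn w \<partial>M) = (\<integral>w\<in>A. indicator B w * C T w \<partial>M)"
      unfolding e1 e2 using loc_int(3)[of T T "A \<inter> B" "real n", OF _ _ AB bd'] by simp
  next
    show "integrable M Sn" by (rule Sn_int)
    show "integrable M (\<lambda>w. indicator B w * C T w)" by (rule ICT_int)
    show "(\<lambda>w. indicator B w * C T w) \<in> borel_measurable (G T)"
      using CT_meas B_sets by measurable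
  qed
  have ind_meas: "(\<lambda>w. indicator B w :: ennreal) \<in> borel_measurable (G T)" using B_sets by measurable
  have pp: "AE w in M. indicator B w * nn_cond_exp M (G T) (\<lambda>w. ennreal (S w)) w
       = nn_cond_exp M (G T) (\<lambda>w. ennreal (Sn w)) w"
  proof -
    have eq: "(\<lambda>w. ennreal (Sn w)) = (\<lambda>w. indicator B w * ennreal (S w))"
      by (auto simp: Sn_def indicator_def)
    show ?thesis unfolding eq by (rule GT.nn_cond_exp_prod[OF ind_meas]) simp
  qed
  have pn: "AE w in M. indicator B w * nn_cond_exp M (G T) (\<lambda>w. ennreal (- S w)) w
       = nn_cond_exp M (G T) (\<lambda>w. ennreal (- Sn w)) w"
  proof -
    have eq: "(\<lambda>w. ennreal (- Sn w)) = (\<lambda>w. indicator B w * ennreal (- S w))"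
      by (auto simp: Sn_def indicator_def)
    show ?thesis unfolding eq by (rule GT.nn_cond_exp_prod[OF ind_meas]) simp
  qed
  have fin: "AE w in M. nn_cond_exp M (G T) g w \<noteq> \<infinity>"
    if gm: "g \<in> borel_measurable M" and gf: "(\<integral>\<^sup>+w. g w \<partial>M) \<noteq> \<infinity>" for g
  proof (rule nn_integral_PInf_AE)
    show "nn_cond_exp M (G T) g \<in> borel_measurable M" by simp
    have "(\<integral>\<^sup>+w. nn_cond_exp M (G T) g w \<partial>M) = (\<integral>\<^sup>+w. 1 * nn_cond_exp M (G T) g w \<partial>M)" by simp
    also have "\<dots> = (\<integral>\<^sup>+w. 1 * g w \<partial>M)" by (rule GT.nn_cond_exp_intg) (simp_all add: gm)
    finally show "(\<integral>\<^sup>+w. nn_cond_exp M (G T) g w \<partial>M) \<noteq> \<infinity>" using gf by simp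
  qed
  have f1: "AE w in M. nn_cond_exp M (G T) (\<lambda>w. ennreal (Sn w)) w \<noteq> \<infinity>"
    using Sn_int by (intro fin) (auto simp: real_integrable_def)
  have f2: "AE w in M. nn_cond_exp M (G T) (\<lambda>w. ennreal (- Sn w)) w \<noteq> \<infinity>"
    using Sn_int by (intro fin) (auto simp: real_integrable_def)
  show ?thesis
    using rce pp pn f1 f2
  proof eventually_elim
    case (elim w)
    show ?case
    proof
      assume wB: "w \<in> B"
      have a1: "nn_cond_exp M (G T) (\<lambda>w. ennreal (S w)) w = nn_cond_exp M (G T) (\<lambda>w. ennreal (Sn w)) w"
        using elim(2) wB by simp
      have a2: "nn_cond_exp M (G T) (\<lambda>w. ennreal (- S w)) w = nn_cond_exp M (G T) (\<lambda>w. ennreal (- Sn w)) w"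
        using elim(3) wB by simp
      have "C T w = real_cond_exp M (G T) Sn w" using elim(1) wB by simp
      also have "\<dots> = enn2real (nn_cond_exp M (G T) (\<lambda>w. ennreal (Sn w)) w)
          - enn2real (nn_cond_exp M (G T) (\<lambda>w. ennreal (- Sn w)) w)"
        unfolding real_cond_exp_def by simp
      finally show "enn2ereal (nn_cond_exp M (G T) (\<lambda>w. ennreal (S w)) w) - enn2ereal (nn_cond_exp M (G T) (\<lambda>w. ennreal (- S w)) w)
         = ereal (C T w)"
        unfolding a1 a2 using elim(4,5) by (simp add: enn_fin_eq)
    qed
  qed
qed

lemma final:
  assumes X[measurable]: "X \<in> borel_measurable M"
    and XS: "AE w in M. X w \<le> (\<Sum>s\<le>T. \<Sum>k\<in>UNIV. a s k w * U s k w)"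
  shows "(\<integral>\<^sup>+w. e2ennreal (gcond_exp M (G T) X w) \<partial>M) \<le> (\<integral>\<^sup>+w. e2ennreal (- gcond_exp M (G T) X w) \<partial>M)"
proof -
  interpret GT: sigma_finite_subalgebra M "G T" using sfs[of T] by simp
  define S where "S = (\<lambda>w. \<Sum>s\<le>T. \<Sum>k\<in>UNIV. a s k w * U s k w)"
  have S_meas[measurable]: "S \<in> borel_measurable M"
  proof -
    have "(\<lambda>w. a s k w * U s k w) \<in> borel_measurable M" if "s \<le> T" for s k
      using a_measM[OF that] U_meas[OF that] by (intro borel_measurable_times)
    then show ?thesis unfolding S_def by (intro borel_measurable_sum) auto
  qed
  have XS': "AE w in M. X w \<le> S w" using XS unfolding S_def .
  have m1: "AE w in M. nn_cond_exp M (G T) (\<lambda>w. ennreal (X w)) w \<le> nn_cond_exp M (G T) (\<lambda>w. ennreal (S w)) w"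
    using XS' by (intro GT.nn_cond_exp_mono) (auto elim!: eventually_mono intro: ennreal_leI)
  have m2: "AE w in M. nn_cond_exp M (G T) (\<lambda>w. ennreal (- S w)) w \<le> nn_cond_exp M (G T) (\<lambda>w. ennreal (- X w)) w"
    using XS' by (intro GT.nn_cond_exp_mono) (auto elim!: eventually_mono intro: ennreal_leI)
  have loc: "AE w in M. \<forall>n. w \<in> Lset T n \<longrightarrow>
    enn2ereal (nn_cond_exp M (G T) (\<lambda>w. ennreal (S w)) w) - enn2ereal (nn_cond_exp M (G T) (\<lambda>w. ennreal (- S w)) w)
     = ereal (C T w)"
    unfolding AE_all_countable S_def using S_local by blast
  have QC: "AE w in M. gcond_exp M (G T) X w \<le> ereal (C T w)"
    using m1 m2 loc AE_space
  proof eventually_elim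
    case (elim w)
    obtain n where "w \<in> Lset T n" using Lset_cover[OF elim(4)] by blast
    then have eq: "enn2ereal (nn_cond_exp M (G T) (\<lambda>w. ennreal (S w)) w) - enn2ereal (nn_cond_exp M (G T) (\<lambda>w. ennreal (- S w)) w)
       = ereal (C T w)" using elim(3) by blast
    have "gcond_exp M (G T) X w \<le> enn2ereal (nn_cond_exp M (G T) (\<lambda>w. ennreal (S w)) w) - enn2ereal (nn_cond_exp M (G T) (\<lambda>w. ennreal (- S w)) w)"
      unfolding gcond_exp_def
      by (rule ereal_minus_mono) (use elim(1,2) in \<open>simp_all add: less_eq_ennreal.rep_eq[symmetric]\<close>)
    then show ?case unfolding eq .
  qed
  have "(\<integral>\<^sup>+w. e2ennreal (gcond_exp M (G T) X w) \<partial>M) \<le> (\<integral>\<^sup>+w. ennreal (C T w) \<partial>M)"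
    using QC by (intro nn_integral_mono_AE) (auto elim!: eventually_mono dest: e2ennreal_mono)
  also have "\<dots> \<le> (\<integral>\<^sup>+w. ennreal (- C T w) \<partial>M)" by (rule induct_all) simp
  also have "\<dots> \<le> (\<integral>\<^sup>+w. e2ennreal (- gcond_exp M (G T) X w) \<partial>M)"
  proof (intro nn_integral_mono_AE)
    show "AE w in M. ennreal (- C T w) \<le> e2ennreal (- gcond_exp M (G T) X w)"
      using QC proof eventually_elim
      case (elim w)
      then have "ereal (- C T w) \<le> - gcond_exp M (G T) X w"
        by (metis ereal_minus_le_minus uminus_ereal.simps(1))
      then have "e2ennreal (ereal (- C T w)) \<le> e2ennreal (- gcond_exp M (G T) X w)" by (rule e2ennreal_mono)
      then show ?case by simp
    qed
  qed
  finally show ?thesis .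
qed

end


lemma vec_nth_meas: fixes f :: "'w \<Rightarrow> 'a::real_normed_vector ^ 'n" assumes "f \<in> borel_measurable M" shows "(\<lambda>w. f w $ i) \<in> borel_measurable M"
  by (rule borel_measurable_continuous_on[OF linear_continuous_on[OF bounded_linear_vec_nth] assms])

lemma sum_prod3:
  fixes f :: "'d::finite \<times> 'd \<times> bool \<Rightarrow> real"
  shows "(\<Sum>k\<in>UNIV. f k) = (\<Sum>i\<in>UNIV. \<Sum>j\<in>UNIV. f (i, j, True) + f (i, j, False))"
proof -
  have "(\<Sum>k\<in>UNIV. f k) = (\<Sum>k\<in>UNIV \<times> UNIV \<times> UNIV. f k)" by simp
  also have "\<dots> = (\<Sum>i\<in>UNIV. \<Sum>jb\<in>UNIV \<times> UNIV. f (i, jb))"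
    by (rule sum.cartesian_product[symmetric, where g="\<lambda>i jb. f (i, jb)", simplified])
  also have "\<dots> = (\<Sum>i\<in>UNIV. \<Sum>j\<in>UNIV. \<Sum>b\<in>UNIV. f (i, j, b))"
  proof (rule sum.cong[OF refl])
    fix i
    have "(\<Sum>j\<in>UNIV. \<Sum>b\<in>UNIV. f (i, j, b)) = (\<Sum>jb\<in>UNIV \<times> UNIV. case_prod (\<lambda>j b. f (i, j, b)) jb)"
      by (rule sum.cartesian_product)
    also have "\<dots> = (\<Sum>jb\<in>UNIV \<times> UNIV. f (i, jb))" by (intro sum.cong) auto
    finally show "(\<Sum>jb\<in>UNIV \<times> UNIV. f (i, jb)) = (\<Sum>j\<in>UNIV. \<Sum>b\<in>UNIV. f (i, j, b))" by simp
  qed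
  also have "\<dots> = (\<Sum>i\<in>UNIV. \<Sum>j\<in>UNIV. f (i, j, True) + f (i, j, False))"
    by (simp add: UNIV_bool add.commute)
  finally show ?thesis .
qed

theorem mainTheorem4:
  fixes M :: "'w measure" and H :: "nat \<Rightarrow> 'w measure" and T :: nat
    and A :: "'d::finite mat set"
    and F :: "nat \<Rightarrow> 'w \<Rightarrow> 'd mat \<Rightarrow> real ^ 'd"
    and g Z :: "'w \<Rightarrow> real ^ 'd"
  assumes "prob_space M" and "complete_measure M"
    and "\<And>t. t \<le> T \<Longrightarrow> subalgebra M (H t)"
    and "\<And>s t. s \<le> t \<Longrightarrow> t \<le> T \<Longrightarrow> sets (H s) \<subseteq> sets (H t)"
    and "closed A" and "convex A" and "cone A"
    and "in_bfF M T A F" and "condHA M T A F" and "condI M T F"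
    and "DF M H T A F \<noteq> {}"
    and "g \<in> At M H A F T T" and "Z \<in> DF M H T A F"
    and "(\<integral>\<^sup>+ w. e2ennreal (- gcond_exp M (H T) (\<lambda>v. Z v \<bullet> g v) w) \<partial>M) < \<infinity>"
  shows "(\<integral>\<^sup>+ w. e2ennreal (gcond_exp M (H T) (\<lambda>v. Z v \<bullet> g v) w) \<partial>M)
         \<le> (\<integral>\<^sup>+ w. e2ennreal (- gcond_exp M (H T) (\<lambda>v. Z v \<bullet> g v) w) \<partial>M)"
proof -
  interpret P: prob_space M by (rule assms(1))
  from assms(12) obtain \<xi> r where gm: "g \<in> borel_measurable M"
    and xi: "\<forall>s\<le>T. \<xi> s \<in> Nt M H A F s" and rm: "r \<in> borel_measurable M"
    and rnn: "\<forall>w\<in>space M. \<forall>k. r w $ k \<ge> 0"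
    and gae: "AE w in M. g w = (\<Sum>s\<le>T. \<xi> s w) - r w"
    unfolding At_def by blast
  have "\<forall>s. \<exists>\<eta>. s \<le> T \<longrightarrow> \<eta> \<in> L0A (H s) A \<and> (AE w in M. \<xi> s w = F s w (\<eta> w))"
    using xi unfolding Nt_def by blast
  then obtain \<eta> where eta: "\<And>s. s \<le> T \<Longrightarrow> \<eta> s \<in> L0A (H s) A \<and> (AE w in M. \<xi> s w = F s w (\<eta> s w))"
    by metis
  have eta_H: "\<eta> s \<in> borel_measurable (H s)" if "s \<le> T" for s
    using eta[OF that] unfolding L0A_def by blast
  have eta_M: "\<eta> s \<in> borel_measurable M" if "s \<le> T" for s
    using measurable_from_subalg[OF assms(3)[OF that] eta_H[OF that]] .
  have ZDF: "Z \<in> DF M H T A F" by (rule assms(13))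
  then have Zm: "Z \<in> borel_measurable M" and Zb: "\<exists>C. AE w in M. norm (Z w) \<le> C"
    and Zpos: "AE w in M. \<forall>i. Z w $ i > 0"
    unfolding DF_def by blast+
  have D1: "AE w in M. Fbar M H F t (\<eta> t) Z w \<le> 0" if "t \<le> T" for t
    using ZDF eta that unfolding DF_def by blast
  obtain C0 where C0: "AE w in M. norm (Z w) \<le> C0" using Zb by blast
  define a where "a s k w = (case k of (i, j, b) \<Rightarrow>
      if b then ppart (\<eta> s w $ i $ j) else npart (\<eta> s w $ i $ j))" for s and k :: "'d \<times> 'd \<times> bool" and w
  define U where "U s k w = (case k of (i, j, b) \<Rightarrow> Z w \<bullet> F s w (if b then eij i j else - eij i j))"
    for s and k :: "'d \<times> 'd \<times> bool" and w
  have Fint: "integrable M (\<lambda>w. F s w (if b then eij i j else - eij i j))" if "s \<le> T" for s i j b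
    using assms(10) that unfolding condI_def by (cases b) auto
  have U_int: "integrable M (U s k)" if sT: "s \<le> T" for s k
  proof -
    obtain i j b where k: "k = (i, j, b)" by (cases k) auto
    let ?e = "if b then eij i j else - eij i j"
    have Fm: "(\<lambda>w. F s w ?e) \<in> borel_measurable M" using Fint[OF sT] by auto
    have "integrable M (\<lambda>w. Z w \<bullet> F s w ?e)"
    proof (rule Bochner_Integration.integrable_bound[where f="\<lambda>w. C0 * norm (F s w ?e)"])
      show "integrable M (\<lambda>w. C0 * norm (F s w ?e))" using Fint[OF sT] by auto
      show "(\<lambda>w. Z w \<bullet> F s w ?e) \<in> borel_measurable M" using Zm Fm by measurable
      show "AE w in M. norm (Z w \<bullet> F s w ?e) \<le> norm (C0 * norm (F s w ?e))"
        using C0 proof eventually_elim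
        case (elim w)
        have "\<bar>Z w \<bullet> F s w ?e\<bar> \<le> norm (Z w) * norm (F s w ?e)" by (rule Cauchy_Schwarz_ineq2)
        also have "\<dots> \<le> C0 * norm (F s w ?e)" using elim by (intro mult_right_mono) auto
        also have "\<dots> \<le> norm (C0 * norm (F s w ?e))" by simp
        finally show ?case by simp
      qed
    qed
    then show ?thesis unfolding U_def[abs_def] k by simp
  qed
  interpret core: core_setting M H T a U
  proof (rule core_setting.intro)
    show "prob_space M" by (rule assms(1))
    show "\<And>t. t \<le> T \<Longrightarrow> subalgebra M (H t)" by (rule assms(3))
    show "\<And>s t. s \<le> t \<Longrightarrow> t \<le> T \<Longrightarrow> sets (H s) \<subseteq> sets (H t)" by (rule assms(4))
    show "\<And>s k w. 0 \<le> a s k w" unfolding a_def ppart_def npart_def by (auto split: prod.splits)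
    show "\<And>s k. s \<le> T \<Longrightarrow> integrable M (U s k)" by (rule U_int)
  next
    fix s and k :: "'d \<times> 'd \<times> bool" assume sT: "s \<le> T"
    obtain i j b where k: "k = (i, j, b)" by (cases k) auto
    have m: "(\<lambda>w. \<eta> s w $ i $ j) \<in> borel_measurable (H s)"
      by (intro vec_nth_meas eta_H[OF sT])
    have "(\<lambda>w. if b then ppart (\<eta> s w $ i $ j) else npart (\<eta> s w $ i $ j)) \<in> borel_measurable (H s)"
      unfolding ppart_def npart_def using m by (cases b) simp_all
    then show "a s k \<in> borel_measurable (H s)" unfolding a_def[abs_def] k by simp
  next
    fix s assume sT: "s \<le> T"
    show "AE w in M. (\<Sum>k\<in>UNIV. a s k w * real_cond_exp M (H s) (U s k) w) \<le> 0"
      using D1[OF sT] proof eventually_elim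
      case (elim w)
      have eT: "U s (i, j, True) = (\<lambda>v. Z v \<bullet> F s v (eij i j))" for i j by (auto simp: U_def)
      have eF: "U s (i, j, False) = (\<lambda>v. Z v \<bullet> F s v (- eij i j))" for i j by (auto simp: U_def)
      have "(\<Sum>k\<in>UNIV. a s k w * real_cond_exp M (H s) (U s k) w) = Fbar M H F s (\<eta> s) Z w"
        unfolding sum_prod3 Fbar_def eT eF by (simp add: a_def)
      then show ?case using elim by simp
    qed
  qed
  have XS: "AE w in M. Z w \<bullet> g w \<le> (\<Sum>s\<le>T. \<Sum>k\<in>UNIV. a s k w * U s k w)"
  proof -
    have ae1: "AE w in M. \<forall>s. s \<le> T \<longrightarrow> \<xi> s w = F s w (\<eta> s w)"
      unfolding AE_all_countable
    proof
      fix s show "AE w in M. s \<le> T \<longrightarrow> \<xi> s w = F s w (\<eta> s w)"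
      proof (cases "s \<le> T")
        case True
        then show ?thesis using eta[OF True] by (auto elim: eventually_mono)
      qed simp
    qed
    have ae2: "AE w in M. \<forall>s. s \<le> T \<longrightarrow> F s w (\<eta> s w) = (\<Sum>i\<in>UNIV. \<Sum>j\<in>UNIV.
              ppart (\<eta> s w $ i $ j) *\<^sub>R F s w (eij i j)
            + npart (\<eta> s w $ i $ j) *\<^sub>R F s w (- eij i j))"
      unfolding AE_all_countable
    proof
      fix s show "AE w in M. s \<le> T \<longrightarrow> F s w (\<eta> s w) = (\<Sum>i\<in>UNIV. \<Sum>j\<in>UNIV.
              ppart (\<eta> s w $ i $ j) *\<^sub>R F s w (eij i j)
            + npart (\<eta> s w $ i $ j) *\<^sub>R F s w (- eij i j))"
      proof (cases "s \<le> T")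
        case True
        have "(\<forall>(\<delta>::real)\<in>{-1, 1}. \<forall>i j. \<delta> *\<^sub>R eij i j \<notin> A \<longrightarrow>
          (AE w in M. F s w (\<delta> *\<^sub>R eij i j) = 0))
         \<and> (\<forall>\<eta> \<in> borel_measurable M. AE w in M.
          F s w (\<eta> w) = (\<Sum>i\<in>UNIV. \<Sum>j\<in>UNIV.
              ppart (\<eta> w $ i $ j) *\<^sub>R F s w (eij i j)
            + npart (\<eta> w $ i $ j) *\<^sub>R F s w (- eij i j)))"
          using assms(9) True unfolding condHA_def by (elim allE impE) 
        then have "AE w in M. F s w (\<eta> s w) = (\<Sum>i\<in>UNIV. \<Sum>j\<in>UNIV.
              ppart (\<eta> s w $ i $ j) *\<^sub>R F s w (eij i j)
            + npart (\<eta> s w $ i $ j) *\<^sub>R F s w (- eij i j))"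
          using eta_M[OF True] by (elim conjE) (erule bspec)
        then show ?thesis by (auto elim: eventually_mono)
      qed simp
    qed
    show ?thesis using gae ae1 ae2 Zpos AE_space
    proof eventually_elim
      case (elim w)
      have rpos: "0 \<le> Z w \<bullet> r w"
      proof -
        have "\<forall>i. 0 \<le> Z w $ i * r w $ i" using elim(4) rnn elim(5) by (simp add: less_imp_le)
        then show ?thesis unfolding inner_vec_def inner_real_def by (intro sum_nonneg) auto
      qed
      have xs: "Z w \<bullet> \<xi> s w = (\<Sum>k\<in>UNIV. a s k w * U s k w)" if sT: "s \<le> T" for s
      proof -
        have "Z w \<bullet> \<xi> s w = Z w \<bullet> (\<Sum>i\<in>UNIV. \<Sum>j\<in>UNIV.
              ppart (\<eta> s w $ i $ j) *\<^sub>R F s w (eij i j)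
            + npart (\<eta> s w $ i $ j) *\<^sub>R F s w (- eij i j))"
        proof -
          have e1: "\<xi> s w = F s w (\<eta> s w)" using elim(2) sT by blast
          have e2: "F s w (\<eta> s w) = (\<Sum>i\<in>UNIV. \<Sum>j\<in>UNIV.
              ppart (\<eta> s w $ i $ j) *\<^sub>R F s w (eij i j)
            + npart (\<eta> s w $ i $ j) *\<^sub>R F s w (- eij i j))" using elim(3) sT by blast
          show ?thesis by (simp only: e1 e2)
        qed
        also have "\<dots> = (\<Sum>i\<in>UNIV. \<Sum>j\<in>UNIV.
              ppart (\<eta> s w $ i $ j) * (Z w \<bullet> F s w (eij i j))
            + npart (\<eta> s w $ i $ j) * (Z w \<bullet> F s w (- eij i j)))"
          by (simp only: inner_sum_right inner_add_right inner_scaleR_right)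
        also have "\<dots> = (\<Sum>k\<in>UNIV. a s k w * U s k w)"
          unfolding sum_prod3 by (simp add: a_def U_def)
        finally show ?thesis .
      qed
      have "Z w \<bullet> g w = (\<Sum>s\<le>T. Z w \<bullet> \<xi> s w) - Z w \<bullet> r w"
        by (simp only: elim(1) inner_diff_right inner_sum_right)
      also have "\<dots> \<le> (\<Sum>s\<le>T. Z w \<bullet> \<xi> s w)" using rpos by simp
      also have "\<dots> = (\<Sum>s\<le>T. \<Sum>k\<in>UNIV. a s k w * U s k w)"
        by (rule sum.cong[OF refl]) (simp add: xs)
      finally show ?case .
    qed
  qed
  show ?thesis
    by (rule core.final[OF _ XS]) (use Zm gm in measurable)
qed

end
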